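(* Let $d\ge 0$, let $G$ be a countable subgroup of $\mathbb{R}^d$, and let $(H_n)_{n\ge1}$ be a Liouville, symmetric, decreasing sequence of random subsemigroups of $G$ such that for every $n$, $H_n$ spans $\mathbb{R}^d$ as a real vector space. Then almost surely there is no $n$ and no closed half-space $\{x\in\mathbb{R}^d:\langle v,x\rangle\ge 0\}$ ($v\neq 0$) containing $H_n$; i.e. almost surely $H_n$ does not eventually get trapped in a closed half-space.
   Context: Let $\mathfrak{S}(G)$ be the set of subsemigroups of $G$, viewed as a subset of $\{0,1\}^G$ with the product topology. A decreasing sequence $(H_n)$ of $\mathfrak{S}(G)$-valued random variables is Liouville if its tail $\sigma$-algebra $\bigcap_n\sigma(H_n,H_{n+1},\ldots)$ is trivial, and symmetric if for every $n$, $H_n$ and $H_n^{-1}=\{-h:h\in H_n\}$ have the same distribution. *)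

theory Defs
  imports "HOL-Probability.Probability"
begin

definition add_subgroup :: "'a::real_vector set \<Rightarrow> bool" where
  "add_subgroup G \<longleftrightarrow> 0 \<in> G \<and> (\<forall>x\<in>G. \<forall>y\<in>G. x + y \<in> G) \<and> (\<forall>x\<in>G. - x \<in> G)"

definition subsemigroup_of :: "'a::real_vector set \<Rightarrow> 'a set \<Rightarrow> bool" where
  "subsemigroup_of G H \<longleftrightarrow> H \<subseteq> G \<and> (\<forall>x\<in>H. \<forall>y\<in>H. x + y \<in> H)"

text \<open>The measurable space S(G): subsemigroups of G, with the Borel sigma-algebra of the
  product topology of {0,1}^G; for countable G this is generated by the coordinate events
  {H. g \<in> H}.\<close>
definition SG_space :: "'a::real_vector set \<Rightarrow> 'a set measure" where
  "SG_space G = sigma {H. subsemigroup_of G H}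
      {{H. subsemigroup_of G H \<and> g \<in> H} | g. g \<in> G}"

definition rv_sigma :: "'w measure \<Rightarrow> 'b measure \<Rightarrow> ('w \<Rightarrow> 'b) \<Rightarrow> 'w set set" where
  "rv_sigma M N X = {X -` A \<inter> space M | A. A \<in> sets N}"

definition (in prob_space) liouville_seq :: "'b measure \<Rightarrow> (nat \<Rightarrow> 'a \<Rightarrow> 'b) \<Rightarrow> bool" where
  "liouville_seq N H \<longleftrightarrow>
     (\<forall>E \<in> tail_events (\<lambda>k. rv_sigma M N (H k)). prob E = 0 \<or> prob E = 1)"

end

theory Submission imports Defs begin
lemma det_lemma:
  fixes Hs :: "nat \<Rightarrow> 'a::euclidean_space set" and D :: "'a set"
  assumes dec: "\<And>n. Hs (Suc n) \<subseteq> Hs n"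
    and sp: "\<And>n. span (Hs n) = UNIV"
    and dense: "\<And>x e. e > 0 \<Longrightarrow> \<exists>c\<in>D. dist c x < e"
    and sym: "\<And>c k. c \<in> D \<Longrightarrow> (\<exists>n. \<exists>v\<in>cball c (1/Suc k). \<forall>h\<in>Hs n. 0 \<le> inner v h)
               \<Longrightarrow> (\<exists>n. \<exists>v\<in>cball (-c) (1/Suc k). \<forall>h\<in>Hs n. 0 \<le> inner v h)"
    and v: "v \<noteq> 0" "Hs n0 \<subseteq> {x. inner v x \<ge> 0}"
  shows False
proof -
  define V where "V n = {v. \<forall>h\<in>Hs n. 0 \<le> inner v h}" for n
  have Hmono: "m \<le> n \<Longrightarrow> Hs n \<subseteq> Hs m" for m n
    using dec by (metis lift_Suc_antimono_le)
  have Vmono: "m \<le> n \<Longrightarrow> V m \<subseteq> V n" for m n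
    using Hmono unfolding V_def by blast
  have Vconv: "convex (V n)" for n
    unfolding V_def convex_def by (auto simp: inner_add_left)
  have Vcone: "cone (V n)" for n
    unfolding V_def cone_def by auto
  have pointed: "w \<in> V n \<Longrightarrow> -w \<in> V n \<Longrightarrow> w = 0" for w n
  proof -
    assume a: "w \<in> V n" "-w \<in> V n"
    have "Hs n \<subseteq> {x. w \<bullet> x = 0}"
      using a unfolding V_def by (auto intro: order.antisym)
    hence "span (Hs n) \<subseteq> {x. w \<bullet> x = 0}"
      by (simp add: span_minimal subspace_hyperplane)
    hence "w \<in> {x. w \<bullet> x = 0}" using sp[of n] by blast
    thus "w = 0" by simp
  qed
  define U where "U = (\<Union>n. V n)"
  have Uconv: "convex U"
    unfolding convex_def U_def
  proof (clarify)
    fix x y m n and a b :: real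
    assume "x \<in> V m" "y \<in> V n" "0 \<le> a" "0 \<le> b" "a + b = 1"
    hence "x \<in> V (max m n)" "y \<in> V (max m n)" using Vmono by (meson max.cobounded1 max.cobounded2 subsetD)+
    hence "a *\<^sub>R x + b *\<^sub>R y \<in> V (max m n)" using Vconv \<open>0\<le>a\<close> \<open>0\<le>b\<close> \<open>a+b=1\<close> by (simp add: convex_def)
    thus "a *\<^sub>R x + b *\<^sub>R y \<in> (\<Union>n. V n)" by blast
  qed
  have Ucone: "cone U"
    unfolding U_def cone_def using Vcone by (auto simp: cone_def)
  have neg: "-w \<in> closure U" if wU: "w \<in> U" for w
  proof -
    obtain m where wm: "w \<in> V m" using wU U_def by auto
    show ?thesis unfolding closure_approachable
    proof (intro allI impI)
      fix e :: real assume e: "e > 0"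
      obtain k :: nat where k: "1 / Suc k < e / 2"
        using e by (metis half_gt_zero nat_approx_posE)
      have rpos: "(0::real) < 1 / Suc k" by simp
      obtain c where c: "c \<in> D" "dist c w < 1 / Suc k" using dense[OF rpos] by blast
      have "\<exists>n. \<exists>v\<in>cball c (1/Suc k). \<forall>h\<in>Hs n. 0 \<le> inner v h"
        using wm c unfolding V_def by (intro exI[of _ m] bexI[of _ w]) (auto simp: mem_cball)
      from sym[OF c(1) this] obtain n u where u: "u \<in> cball (-c) (1/Suc k)" "u \<in> V n"
        unfolding V_def by auto
      have "dist u (-w) \<le> dist u (-c) + dist (-c) (-w)" by (rule dist_triangle)
      also have "dist (-c) (-w) = dist c w" by (simp add: dist_minus)
      finally have "dist u (-w) < e" using u(1) c(2) k by (simp add: mem_cball dist_commute)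
      moreover have "u \<in> U" using u(2) U_def by auto
      ultimately show "\<exists>y\<in>U. dist y (- w) < e" by blast
    qed
  qed
  have negc: "-x \<in> closure U" if xU: "x \<in> closure U" for x
    unfolding closure_approachable
  proof (intro allI impI)
    fix e :: real assume e: "e > 0"
    obtain y where y: "y \<in> U" "dist y x < e/2" using xU e unfolding closure_approachable
      by (meson half_gt_zero)
    obtain z where z: "z \<in> U" "dist z (-y) < e/2" using neg[OF y(1)] e unfolding closure_approachable
      by (meson half_gt_zero)
    have "dist z (-x) \<le> dist z (-y) + dist (-y) (-x)" by (rule dist_triangle)
    also have "dist (-y) (-x) = dist y x" by (simp add: dist_minus)
    finally have "dist z (-x) < e" using y z by simp
    thus "\<exists>y\<in>U. dist y (- x) < e" using z by blast
  qed
  have cc: "convex (closure U)" "cone (closure U)"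
    using Uconv Ucone by (auto simp: convex_closure cone_closure)
  have "0 \<in> V 0" unfolding V_def by simp
  hence "0 \<in> closure U" unfolding U_def by (meson UN_I UNIV_I closure_subset subsetD)
  have sub: "subspace (closure U)"
    unfolding subspace_def
  proof (intro conjI ballI allI)
    show "0 \<in> closure U" by fact
  next
    fix x y assume xy: "x \<in> closure U" "y \<in> closure U"
    have "(1/2) *\<^sub>R x + (1/2) *\<^sub>R y \<in> closure U"
      using cc(1) xy by (simp add: convex_def)
    hence "2 *\<^sub>R ((1/2) *\<^sub>R x + (1/2) *\<^sub>R y) \<in> closure U"
      using cc(2) by (simp add: cone_def)
    thus "x + y \<in> closure U" by (simp add: scaleR_add_right)
  next
    fix a :: real and x assume x: "x \<in> closure U"
    show "a *\<^sub>R x \<in> closure U"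
    proof (cases "a \<ge> 0")
      case True thus ?thesis using cc(2) x by (simp add: cone_def)
    next
      case False
      have "\<forall>c\<ge>0. c *\<^sub>R (-x) \<in> closure U" using cc(2) negc[OF x] unfolding cone_def by blast
      hence "(-a) *\<^sub>R (-x) \<in> closure U" using False by (meson linorder_le_cases neg_0_le_iff_le)
      thus ?thesis by simp
    qed
  qed
  have "closure U = rel_interior (closure U)"
    using rel_interior_affine[OF subspace_imp_affine[OF sub]] by simp
  also have "\<dots> = rel_interior U" using convex_rel_interior_closure[OF Uconv] .
  also have "\<dots> \<subseteq> U" by (rule rel_interior_subset)
  finally have cU: "closure U \<subseteq> U" .
  have vV: "v \<in> V n0" using v(2) unfolding V_def by (auto simp: inner_commute)
  hence "v \<in> U" unfolding U_def by auto
  hence "-v \<in> U" using neg cU by auto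
  then obtain m where "-v \<in> V m" unfolding U_def by auto
  hence "-v \<in> V (max m n0)" "v \<in> V (max m n0)" using vV Vmono by (meson max.cobounded1 max.cobounded2 subsetD)+
  hence "v = 0" using pointed by blast
  thus False using v(1) by simp
qed

lemma SG_space_eq: "space (SG_space G) = {H. subsemigroup_of G H}"
  unfolding SG_space_def by (simp add: space_measure_of_conv)

lemma SG_sets_eq: "sets (SG_space G) = sigma_sets {H. subsemigroup_of G H}
      {{H. subsemigroup_of G H \<and> g \<in> H} | g. g \<in> G}"
  unfolding SG_space_def by (rule sets_measure_of) auto

lemma SG_gen: "g \<in> G \<Longrightarrow> {K \<in> space (SG_space G). g \<in> K} \<in> sets (SG_space G)"
  unfolding SG_sets_eq SG_space_eq by (rule sigma_sets.Basic) auto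

lemma SG_finite_sub:
  assumes "finite F" "F \<subseteq> G"
  shows "{K \<in> space (SG_space G). F \<subseteq> K} \<in> sets (SG_space G)"
  using assms
proof (induction F rule: finite_induct)
  case empty then show ?case by simp
next
  case (insert g F)
  have "{K \<in> space (SG_space G). insert g F \<subseteq> K} =
        {K \<in> space (SG_space G). g \<in> K} \<inter> {K \<in> space (SG_space G). F \<subseteq> K}" by auto
  then show ?case using insert SG_gen[of g G] by auto
qed

lemma SG_compact_event:
  fixes G :: "'a::euclidean_space set" and C :: "'a set"
  assumes C: "compact C" and G: "countable G"
  shows "{K \<in> space (SG_space G). \<exists>v\<in>C. \<forall>h\<in>K. 0 \<le> inner v h} \<in> sets (SG_space G)"
proof -
  define FS where "FS = {F. finite F \<and> F \<subseteq> G}"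
  define Z where "Z F = {K \<in> space (SG_space G). F \<subseteq> K \<longrightarrow> (\<exists>v\<in>C. \<forall>h\<in>F. 0 \<le> inner v h)}" for F
  have Zs: "Z F \<in> sets (SG_space G)" if "F \<in> FS" for F
  proof (cases "\<exists>v\<in>C. \<forall>h\<in>F. 0 \<le> inner v h")
    case True
    then have "Z F = space (SG_space G)" unfolding Z_def by auto
    then show ?thesis by simp
  next
    case False
    then have "Z F = space (SG_space G) - {K \<in> space (SG_space G). F \<subseteq> K}" unfolding Z_def by auto
    then show ?thesis using SG_finite_sub[of F G] that unfolding FS_def by auto
  qed
  have cFS: "countable FS" unfolding FS_def using G by (rule countable_Collect_finite_subset)
  have ne: "{} \<in> FS" unfolding FS_def by simp
  have eq: "{K \<in> space (SG_space G). \<exists>v\<in>C. \<forall>h\<in>K. 0 \<le> inner v h} = (\<Inter>F\<in>FS. Z F)"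
  proof (intro equalityI subsetI)
    fix K assume "K \<in> {K \<in> space (SG_space G). \<exists>v\<in>C. \<forall>h\<in>K. 0 \<le> inner v h}"
    then show "K \<in> (\<Inter>F\<in>FS. Z F)" unfolding Z_def by auto
  next
    fix K assume K: "K \<in> (\<Inter>F\<in>FS. Z F)"
    then have Ksp: "K \<in> space (SG_space G)" using ne unfolding Z_def by auto
    then have KG: "K \<subseteq> G" by (simp add: SG_space_eq subsemigroup_of_def)
    have "C \<inter> \<Inter>((\<lambda>h. {v. 0 \<le> inner v h}) ` K) \<noteq> {}"
    proof (rule compact_imp_fip[OF C])
      fix T assume "T \<in> (\<lambda>h. {v. 0 \<le> inner v h}) ` K"
      then obtain h where "T = {v. inner h v \<ge> 0}" by (auto simp: inner_commute)
      then show "closed T" by (simp add: closed_halfspace_ge)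
    next
      fix F' assume F': "finite F'" "F' \<subseteq> (\<lambda>h. {v. 0 \<le> inner v h}) ` K"
      then obtain F0 where F0: "F0 \<subseteq> K" "finite F0" "F' = (\<lambda>h. {v. 0 \<le> inner v h}) ` F0"
        by (meson finite_subset_image)
      then have "F0 \<in> FS" using KG unfolding FS_def by auto
      then have "K \<in> Z F0" using K by auto
      then obtain v where "v \<in> C" "\<forall>h\<in>F0. 0 \<le> inner v h" using F0 unfolding Z_def by auto
      then show "C \<inter> \<Inter>F' \<noteq> {}" using F0 by auto
    qed
    then show "K \<in> {K \<in> space (SG_space G). \<exists>v\<in>C. \<forall>h\<in>K. 0 \<le> inner v h}" using Ksp by auto
  qed
  show ?thesis unfolding eq
    by (rule sets.countable_INT') (use cFS ne Zs in auto)
qed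

lemma sub_neg:
  fixes K G :: "'a::real_vector set"
  assumes "K \<subseteq> G" "\<forall>x\<in>K. \<forall>y\<in>K. x + y \<in> K" "\<forall>x\<in>G. - x \<in> G"
  shows "subsemigroup_of G (uminus ` K)"
  unfolding subsemigroup_of_def
proof (intro conjI ballI)
  show "uminus ` K \<subseteq> G" using assms by auto
next
  fix x y assume "x \<in> uminus ` K" "y \<in> uminus ` K"
  then obtain a b where ab: "a \<in> K" "b \<in> K" "x = -a" "y = -b" by auto
  then have "x + y = - (a + b)" by simp
  then show "x + y \<in> uminus ` K" using ab assms(2) by blast
qed

theorem mainTheorem6:
  fixes M :: "'w measure"
    and G :: "'a::euclidean_space set"
    and H :: "nat \<Rightarrow> 'w \<Rightarrow> 'a set"
  assumes "prob_space M"
    and "countable G" and "add_subgroup G"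
    and "\<And>n. H n \<in> measurable M (SG_space G)"
    and "\<And>n \<omega>. \<omega> \<in> space M \<Longrightarrow> subsemigroup_of G (H n \<omega>)"
    and "\<And>n \<omega>. \<omega> \<in> space M \<Longrightarrow> H (Suc n) \<omega> \<subseteq> H n \<omega>"
    and "prob_space.liouville_seq M (SG_space G) H"
    and "\<And>n. distr M (SG_space G) (H n) = distr M (SG_space G) (\<lambda>\<omega>. uminus ` H n \<omega>)"
    and "\<And>n \<omega>. \<omega> \<in> space M \<Longrightarrow> span (H n \<omega>) = UNIV"
  shows "AE \<omega> in M. \<forall>n. \<forall>v. v \<noteq> 0 \<longrightarrow> \<not> (H n \<omega> \<subseteq> {x. inner v x \<ge> 0})"
proof -
  interpret prob_space M by fact
  note Hmeas = assms(4) and Hsg = assms(5) and Hdec = assms(6) and Hsym = assms(8) and Hspan = assms(9)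
  have liou: "\<And>E. E \<in> tail_events (\<lambda>k. rv_sigma M (SG_space G) (H k)) \<Longrightarrow> prob E = 0 \<or> prob E = 1"
    using assms(7) unfolding liouville_seq_def by blast
  let ?S = "SG_space G"
  define P where "P C K \<longleftrightarrow> (\<exists>v\<in>C. \<forall>h\<in>K. 0 \<le> inner v h)" for C and K :: "'a set"
  define B where "B c k = cball c (1 / real (Suc k))" for c :: 'a and k :: nat
  define X where "X c k = {K \<in> space ?S. P (B c k) K}" for c k
  define E where "E n c k = {\<omega> \<in> space M. P (B c k) (H n \<omega>)}" for n c k
  define A where "A c k = (\<Union>n. E n c k)" for c k
  have Hsp: "\<omega> \<in> space M \<Longrightarrow> H n \<omega> \<in> space ?S" for n \<omega>
    using Hsg by (simp add: SG_space_eq)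
  have Xs: "X c k \<in> sets ?S" for c k
    unfolding X_def P_def B_def by (rule SG_compact_event[OF compact_cball assms(2)])
  have Epre: "E n c k = H n -` X c k \<inter> space M" for n c k
    unfolding E_def X_def using Hsp by auto
  have Es: "E n c k \<in> sets M" for n c k
    unfolding Epre using Hmeas Xs by (rule measurable_sets)
  have Erv: "E n c k \<in> rv_sigma M ?S (H n)" for n c k
    unfolding rv_sigma_def Epre using Xs by blast
  have As: "A c k \<in> sets M" for c k unfolding A_def using Es by auto
  have Pmono: "P C K \<Longrightarrow> K' \<subseteq> K \<Longrightarrow> P C K'" for C K K' unfolding P_def by blast
  have Hanti: "\<omega> \<in> space M \<Longrightarrow> m \<le> n \<Longrightarrow> H n \<omega> \<subseteq> H m \<omega>" for \<omega> m n
  proof -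
    assume w: "\<omega> \<in> space M" and mn: "m \<le> n"
    have "\<And>n. H (Suc n) \<omega> \<subseteq> H n \<omega>" using Hdec[OF w] .
    then show "H n \<omega> \<subseteq> H m \<omega>" using mn by (rule lift_Suc_antimono_le)
  qed
  have Emono: "m \<le> n \<Longrightarrow> E m c k \<subseteq> E n c k" for m n c k
    unfolding E_def using Hanti Pmono by blast
  have Atail: "A c k \<in> tail_events (\<lambda>k. rv_sigma M ?S (H k))" for c k
    unfolding tail_events_def
  proof (intro InterI, clarify)
    fix m
    have "A c k = (\<Union>i. E (i + m) c k)"
    proof (intro equalityI subsetI)
      fix \<omega> assume "\<omega> \<in> A c k"
      then obtain n where "\<omega> \<in> E n c k" unfolding A_def by auto
      then have "\<omega> \<in> E (n + m) c k" using Emono[of n "n+m" c k] by auto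
      then show "\<omega> \<in> (\<Union>i. E (i + m) c k)" by blast
    next
      fix \<omega> assume "\<omega> \<in> (\<Union>i. E (i + m) c k)"
      then show "\<omega> \<in> A c k" unfolding A_def by blast
    qed
    also have "\<dots> \<in> sigma_sets (space M) (\<Union> ((\<lambda>k. rv_sigma M ?S (H k)) ` {m..}))"
    proof -
      have "E (i + m) c k \<in> \<Union> ((\<lambda>k. rv_sigma M ?S (H k)) ` {m..})" for i
        using Erv[of "i+m" c k] by auto
      then show ?thesis by (intro sigma_sets.Union sigma_sets.Basic)
    qed
    finally show "A c k \<in> sigma_sets (space M) (\<Union> ((\<lambda>k. rv_sigma M ?S (H k)) ` {m..}))" .
  qed
  have A01: "prob (A c k) = 0 \<or> prob (A c k) = 1" for c k using liou Atail by blast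
  have negmeas: "(\<lambda>\<omega>. uminus ` H n \<omega>) \<in> measurable M ?S" for n
    unfolding SG_space_def
  proof (rule measurable_measure_of)
    show "{{H. subsemigroup_of G H \<and> g \<in> H} | g. g \<in> G} \<subseteq> Pow {H. subsemigroup_of G H}" by auto
  next
    show "(\<lambda>\<omega>. uminus ` H n \<omega>) \<in> space M \<rightarrow> {H. subsemigroup_of G H}"
    proof
      fix \<omega> assume w: "\<omega> \<in> space M"
      have "H n \<omega> \<subseteq> G" "\<forall>x\<in>H n \<omega>. \<forall>y\<in>H n \<omega>. x + y \<in> H n \<omega>"
        using Hsg[OF w] by (auto simp: subsemigroup_of_def)
      moreover have "\<forall>x\<in>G. - x \<in> G" using assms(3) by (simp add: add_subgroup_def)
      ultimately have "subsemigroup_of G (uminus ` H n \<omega>)"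
        by (rule sub_neg)
      then show "uminus ` H n \<omega> \<in> {H. subsemigroup_of G H}" by simp
    qed
  next
    fix Y assume "Y \<in> {{H. subsemigroup_of G H \<and> g \<in> H} | g. g \<in> G}"
    then obtain g where g: "g \<in> G" "Y = {H. subsemigroup_of G H \<and> g \<in> H}" by auto
    have mg: "-g \<in> G" using g(1) assms(3) by (simp add: add_subgroup_def)
    have sgn: "\<omega> \<in> space M \<Longrightarrow> subsemigroup_of G (uminus ` H n \<omega>)" for \<omega>
    proof -
      assume w: "\<omega> \<in> space M"
      have "H n \<omega> \<subseteq> G" "\<forall>x\<in>H n \<omega>. \<forall>y\<in>H n \<omega>. x + y \<in> H n \<omega>"
        using Hsg[OF w] by (auto simp: subsemigroup_of_def)
      moreover have "\<forall>x\<in>G. - x \<in> G" using assms(3) by (simp add: add_subgroup_def)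
      ultimately show "subsemigroup_of G (uminus ` H n \<omega>)"
        by (rule sub_neg)
    qed
    have "(\<lambda>\<omega>. uminus ` H n \<omega>) -` Y \<inter> space M = H n -` {K \<in> space ?S. -g \<in> K} \<inter> space M"
    proof (intro equalityI subsetI)
      fix \<omega> assume "\<omega> \<in> (\<lambda>\<omega>. uminus ` H n \<omega>) -` Y \<inter> space M"
      then have w: "\<omega> \<in> space M" and "g \<in> uminus ` H n \<omega>" using g(2) by auto
      then obtain a where "a \<in> H n \<omega>" "g = -a" by auto
      then have "-g \<in> H n \<omega>" by simp
      then show "\<omega> \<in> H n -` {K \<in> space ?S. -g \<in> K} \<inter> space M" using w Hsp by auto
    next
      fix \<omega> assume "\<omega> \<in> H n -` {K \<in> space ?S. -g \<in> K} \<inter> space M"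
      then have w: "\<omega> \<in> space M" and "-g \<in> H n \<omega>" by auto
      have "- (-g) \<in> uminus ` H n \<omega>" using \<open>-g \<in> H n \<omega>\<close> by (rule imageI)
      then show "\<omega> \<in> (\<lambda>\<omega>. uminus ` H n \<omega>) -` Y \<inter> space M" using w sgn[OF w] g(2) by simp
    qed
    also have "\<dots> \<in> sets M" using Hmeas SG_gen[OF mg] by (rule measurable_sets)
    finally show "(\<lambda>\<omega>. uminus ` H n \<omega>) -` Y \<inter> space M \<in> sets M" .
  qed
  have Psym: "P (B c k) (uminus ` K) \<longleftrightarrow> P (B (-c) k) K" for c k K
  proof
    assume "P (B c k) (uminus ` K)"
    then obtain u where u: "u \<in> B c k" "\<forall>h\<in>K. 0 \<le> inner u (-h)" unfolding P_def by auto
    have "-u \<in> B (-c) k" using u(1) unfolding B_def by (simp add: mem_cball dist_minus)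
    moreover have "\<forall>h\<in>K. 0 \<le> inner (-u) h" using u(2) by simp
    ultimately show "P (B (-c) k) K" unfolding P_def by blast
  next
    assume "P (B (-c) k) K"
    then obtain u where u: "u \<in> B (-c) k" "\<forall>h\<in>K. 0 \<le> inner u h" unfolding P_def by auto
    have "dist c (-u) = dist (-c) u" by (metis dist_minus minus_minus)
    then have "-u \<in> B c k" using u(1) unfolding B_def by (simp add: mem_cball)
    moreover have "\<forall>h\<in>uminus ` K. 0 \<le> inner (-u) h" using u(2) by auto
    ultimately show "P (B c k) (uminus ` K)" unfolding P_def by blast
  qed
  have Eeq: "emeasure M (E n c k) = emeasure M (E n (-c) k)" for n c k
  proof -
    have "emeasure M (E n c k) = emeasure (distr M ?S (H n)) (X c k)"
      unfolding Epre by (rule emeasure_distr[OF Hmeas Xs, symmetric])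
    also have "\<dots> = emeasure (distr M ?S (\<lambda>\<omega>. uminus ` H n \<omega>)) (X c k)" using Hsym by simp
    also have "\<dots> = emeasure M ((\<lambda>\<omega>. uminus ` H n \<omega>) -` X c k \<inter> space M)"
      by (rule emeasure_distr[OF negmeas Xs])
    also have "(\<lambda>\<omega>. uminus ` H n \<omega>) -` X c k \<inter> space M = E n (-c) k"
    proof (intro equalityI subsetI)
      fix \<omega> assume "\<omega> \<in> (\<lambda>\<omega>. uminus ` H n \<omega>) -` X c k \<inter> space M"
      then have w: "\<omega> \<in> space M" "P (B c k) (uminus ` H n \<omega>)" unfolding X_def by auto
      then show "\<omega> \<in> E n (-c) k" unfolding E_def using Psym by blast
    next
      fix \<omega> assume "\<omega> \<in> E n (-c) k"
      then have w: "\<omega> \<in> space M" "P (B (-c) k) (H n \<omega>)" unfolding E_def by auto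
      then have "P (B c k) (uminus ` H n \<omega>)" using Psym by blast
      moreover have "uminus ` H n \<omega> \<in> space ?S" using measurable_space[OF negmeas w(1)] .
      ultimately show "\<omega> \<in> (\<lambda>\<omega>. uminus ` H n \<omega>) -` X c k \<inter> space M"
        unfolding X_def using w(1) by blast
    qed
    finally show ?thesis .
  qed
  have Asym: "prob (A c k) \<noteq> 0 \<Longrightarrow> prob (A (-c) k) \<noteq> 0" for c k
  proof (rule ccontr)
    assume a: "prob (A c k) \<noteq> 0" and "\<not> prob (A (-c) k) \<noteq> 0"
    then have "A (-c) k \<in> null_sets M" using As by (simp add: emeasure_eq_measure null_sets_def)
    then have "E n (-c) k \<in> null_sets M" for n
      using Es unfolding A_def by (meson UNIV_I UN_upper null_sets_subset)
    then have "E n c k \<in> null_sets M" for n using Eeq Es by (simp add: null_sets_def)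
    then have "A c k \<in> null_sets M" unfolding A_def by blast
    then show False using a by (simp add: emeasure_eq_measure null_sets_def)
  qed
  obtain D0 :: "'a set" where D0: "countable D0" "\<And>Y. open Y \<Longrightarrow> Y \<noteq> {} \<Longrightarrow> \<exists>d\<in>D0. d \<in> Y"
    using countable_dense_exists by blast
  define D where "D = D0 \<union> uminus ` D0"
  have cD: "countable D" unfolding D_def using D0(1) by simp
  have Dneg: "c \<in> D \<Longrightarrow> -c \<in> D" for c unfolding D_def by force
  have dense: "\<exists>c\<in>D. dist c x < e" if epos: "e > 0" for x :: 'a and e :: real
  proof -
    obtain d where "d \<in> D0" "d \<in> ball x e" using D0(2)[of "ball x e"] epos by force
    then show ?thesis unfolding D_def by (auto simp: dist_commute)
  qed
  have AEQ: "AE \<omega> in M. \<forall>c\<in>D. \<forall>k. (\<omega> \<in> A c k \<longrightarrow> prob (A c k) \<noteq> 0) \<and> (prob (A c k) \<noteq> 0 \<longrightarrow> \<omega> \<in> A c k)"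
  proof (subst AE_ball_countable[OF cD], intro ballI, subst AE_all_countable, intro allI)
    fix c k
    show "AE \<omega> in M. (\<omega> \<in> A c k \<longrightarrow> prob (A c k) \<noteq> 0) \<and> (prob (A c k) \<noteq> 0 \<longrightarrow> \<omega> \<in> A c k)"
    proof (cases "prob (A c k) = 0")
      case True
      then have "A c k \<in> null_sets M" using As by (simp add: emeasure_eq_measure null_sets_def)
      from AE_not_in[OF this] show ?thesis by eventually_elim (use True in auto)
    next
      case False
      then have "prob (A c k) = 1" using A01 by blast
      then have "AE \<omega> in M. \<omega> \<in> A c k" using AE_in_set_eq_1[OF As] by simp
      then show ?thesis by eventually_elim (use False in auto)
    qed
  qed
  show ?thesis
    using AEQ AE_space
  proof eventually_elim
    case (elim \<omega>)
    show ?case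
    proof (intro allI impI notI)
      fix n0 v assume v: "v \<noteq> 0" "H n0 \<omega> \<subseteq> {x. inner v x \<ge> 0}"
      show False
      proof (rule det_lemma[of "\<lambda>n. H n \<omega>" D v n0])
        show "H (Suc n) \<omega> \<subseteq> H n \<omega>" for n using Hdec elim(2) by blast
        show "span (H n \<omega>) = UNIV" for n using Hspan elim(2) by blast
        show "\<exists>c\<in>D. dist c x < e" if "e > 0" for x e using dense that by blast
        show "v \<noteq> 0" "H n0 \<omega> \<subseteq> {x. inner v x \<ge> 0}" using v by auto
      next
        fix c k assume c: "c \<in> D" and ex: "\<exists>n. \<exists>v\<in>cball c (1/Suc k). \<forall>h\<in>H n \<omega>. 0 \<le> inner v h"
        then have "\<omega> \<in> A c k" using elim(2) unfolding A_def E_def P_def B_def by auto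
        then have "prob (A c k) \<noteq> 0" using elim(1) c by blast
        then have "prob (A (-c) k) \<noteq> 0" by (rule Asym)
        then have "\<omega> \<in> A (-c) k" using elim(1) Dneg[OF c] by blast
        then show "\<exists>n. \<exists>v\<in>cball (-c) (1/Suc k). \<forall>h\<in>H n \<omega>. 0 \<le> inner v h"
          unfolding A_def E_def P_def B_def by auto
      qed
    qed
  qed
qed

end
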